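(* Assume Conditions (C1) and (C2) below. Let $\lambda_m=\sup\{\lambda\in[0,1]:\widehat{\mathrm{FDR}}_m(\lambda)\le\alpha\}$, where $$\widehat{\mathrm{FDR}}_m(\lambda)=\frac{\sum_{i=1}^m\mathrm{Lfdr}_i(x_i)\mathbf I\{\mathrm{Lfdr}_i(x_i)\le\lambda\}}{\sum_{i=1}^m\mathbf I\{\mathrm{Lfdr}_i(x_i)\le\lambda\}},$$ and reject $H_i$ iff $\mathrm{Lfdr}_i(x_i)\le\lambda_m$. Then $$\limsup_{m\to\infty}\mathrm{FDR}_m(\lambda_m)\le\alpha,\qquad \mathrm{FDR}_m(\lambda)=E\Big[\frac{V_m(\lambda)}{D_{m,0}(\lambda)\vee1}\Big].$$
   Context: Setting: for $i=1,\dots,m$, $\theta_i\in\{0,1\}$ ($\theta_i=1$ iff $H_i$ is non-null), $P(\theta_i=0)=\pi_{0i}$, and the $p$-value $x_i$ given $\theta_i$ has density $(1-\theta_i)f_0+\theta_if_1$ on $[0,1]$; $f_0,f_1,\pi_{0i}$ are known. $\mathrm{Lfdr}_i(x)=\pi_{0i}f_0(x)/\{\pi_{0i}f_0(x)+(1-\pi_{0i})f_1(x)\}$. $V_m(\lambda)=\sum_{i=1}^m\mathbf I\{\mathrm{Lfdr}_i(x_i)\le\lambda\}(1-\theta_i)$, $D_{m,0}(\lambda)=\sum_{i=1}^m\mathbf I\{\mathrm{Lfdr}_i(x_i)\le\lambda\}$. $\alpha\in(0,1)$ is the target level. (C1): for every $\lambda\in[0,1]$, as $m\to\infty$, $m^{-1}D_{m,0}(\lambda)\to_p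 D_0(\lambda)$, $m^{-1}\sum_{i=1}^m\mathrm{Lfdr}_i(x_i)\mathbf I\{\mathrm{Lfdr}_i(x_i)\le\lambda\}\to_p D_1(\lambda)$, and $m^{-1}V_m(\lambda)\to_p D_1(\lambda)$, where $D_0,D_1$ are continuous functions on $[0,1]$. (C2): with $R(\lambda)=D_1(\lambda)/D_0(\lambda)$, there exists $\lambda_\infty\in(0,1]$ with $R(\lambda_\infty)<\alpha$. *)

theory Defs
  imports "HOL-Probability.Probability"
begin

definition Lfdr :: "(nat \<Rightarrow> real) \<Rightarrow> (real \<Rightarrow> real) \<Rightarrow> (real \<Rightarrow> real) \<Rightarrow> nat \<Rightarrow> real \<Rightarrow> real" where
  "Lfdr \<pi>0 f0 f1 i t = \<pi>0 i * f0 t / (\<pi>0 i * f0 t + (1 - \<pi>0 i) * f1 t)"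

text \<open>V_m(lambda): number of false rejections (theta i = False means null).\<close>
definition Vm :: "(nat \<Rightarrow> real) \<Rightarrow> (real \<Rightarrow> real) \<Rightarrow> (real \<Rightarrow> real) \<Rightarrow>
    (nat \<Rightarrow> 'a \<Rightarrow> bool) \<Rightarrow> (nat \<Rightarrow> 'a \<Rightarrow> real) \<Rightarrow> nat \<Rightarrow> real \<Rightarrow> 'a \<Rightarrow> real" where
  "Vm \<pi>0 f0 f1 \<theta> x m lam \<omega> =
     (\<Sum>i\<in>{1..m}. if Lfdr \<pi>0 f0 f1 i (x i \<omega>) \<le> lam \<and> \<not> \<theta> i \<omega> then 1 else 0)"

definition Dm0 :: "(nat \<Rightarrow> real) \<Rightarrow> (real \<Rightarrow> real) \<Rightarrow> (real \<Rightarrow> real) \<Rightarrow>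
    (nat \<Rightarrow> 'a \<Rightarrow> real) \<Rightarrow> nat \<Rightarrow> real \<Rightarrow> 'a \<Rightarrow> real" where
  "Dm0 \<pi>0 f0 f1 x m lam \<omega> =
     (\<Sum>i\<in>{1..m}. if Lfdr \<pi>0 f0 f1 i (x i \<omega>) \<le> lam then 1 else 0)"

definition Dm1 :: "(nat \<Rightarrow> real) \<Rightarrow> (real \<Rightarrow> real) \<Rightarrow> (real \<Rightarrow> real) \<Rightarrow>
    (nat \<Rightarrow> 'a \<Rightarrow> real) \<Rightarrow> nat \<Rightarrow> real \<Rightarrow> 'a \<Rightarrow> real" where
  "Dm1 \<pi>0 f0 f1 x m lam \<omega> =
     (\<Sum>i\<in>{1..m}. if Lfdr \<pi>0 f0 f1 i (x i \<omega>) \<le> lam then Lfdr \<pi>0 f0 f1 i (x i \<omega>) else 0)"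

text \<open>Estimated FDR (the 0/0 case evaluates to 0, which is the HOL convention x/0 = 0).\<close>
definition FDRhat :: "(nat \<Rightarrow> real) \<Rightarrow> (real \<Rightarrow> real) \<Rightarrow> (real \<Rightarrow> real) \<Rightarrow>
    (nat \<Rightarrow> 'a \<Rightarrow> real) \<Rightarrow> nat \<Rightarrow> real \<Rightarrow> 'a \<Rightarrow> real" where
  "FDRhat \<pi>0 f0 f1 x m lam \<omega> = Dm1 \<pi>0 f0 f1 x m lam \<omega> / Dm0 \<pi>0 f0 f1 x m lam \<omega>"

definition lambda_m :: "(nat \<Rightarrow> real) \<Rightarrow> (real \<Rightarrow> real) \<Rightarrow> (real \<Rightarrow> real) \<Rightarrow>
    (nat \<Rightarrow> 'a \<Rightarrow> real) \<Rightarrow> real \<Rightarrow> nat \<Rightarrow> 'a \<Rightarrow> real" where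
  "lambda_m \<pi>0 f0 f1 x \<alpha> m \<omega> = Sup {lam \<in> {0..1}. FDRhat \<pi>0 f0 f1 x m lam \<omega> \<le> \<alpha>}"

definition FDRm :: "'a measure \<Rightarrow> (nat \<Rightarrow> real) \<Rightarrow> (real \<Rightarrow> real) \<Rightarrow> (real \<Rightarrow> real) \<Rightarrow>
    (nat \<Rightarrow> 'a \<Rightarrow> bool) \<Rightarrow> (nat \<Rightarrow> 'a \<Rightarrow> real) \<Rightarrow> nat \<Rightarrow> ('a \<Rightarrow> real) \<Rightarrow> real" where
  "FDRm M \<pi>0 f0 f1 \<theta> x m Lam =
     (\<integral>\<omega>. Vm \<pi>0 f0 f1 \<theta> x m (Lam \<omega>) \<omega> / max (Dm0 \<pi>0 f0 f1 x m (Lam \<omega>) \<omega>) 1 \<partial>M)"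

definition conv_in_prob :: "'a measure \<Rightarrow> (nat \<Rightarrow> 'a \<Rightarrow> real) \<Rightarrow> real \<Rightarrow> bool" where
  "conv_in_prob M X c \<longleftrightarrow>
     (\<forall>\<epsilon>>0. ((\<lambda>m. measure M {\<omega> \<in> space M. \<bar>X m \<omega> - c\<bar> > \<epsilon>}) \<longlongrightarrow> 0) sequentially)"

end

theory Submission
  imports Defs
begin

lemma Lfdr_bounds:
  fixes p a b :: real
  assumes "0 \<le> p" "p \<le> 1" "0 \<le> a" "0 \<le> b"
  shows "0 \<le> p * a / (p * a + (1 - p) * b)" "p * a / (p * a + (1 - p) * b) \<le> 1"
proof -
  have h: "0 \<le> p*a" "0 \<le> (1-p)*b" using assms by auto
  then show "0 \<le> p * a / (p * a + (1 - p) * b)" by simp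
  show "p * a / (p * a + (1 - p) * b) \<le> 1" using h
    by (cases "p * a + (1 - p) * b = 0") (auto simp: divide_le_eq)
qed

lemma tendsto_measure_UN_zero:
  assumes "finite I" "\<And>k m. k \<in> I \<Longrightarrow> A k m \<in> sets M"
    and "\<And>k. k \<in> I \<Longrightarrow> (\<lambda>m. measure M (A k m)) \<longlonglongrightarrow> 0"
  shows "(\<lambda>m. measure M (\<Union>k\<in>I. A k m)) \<longlonglongrightarrow> 0"
proof (rule tendsto_sandwich[where f="\<lambda>_. 0" and h="\<lambda>m. \<Sum>k\<in>I. measure M (A k m)"])
  show "\<forall>\<^sub>F m in sequentially. 0 \<le> measure M (\<Union>k\<in>I. A k m)" by simp
  show "\<forall>\<^sub>F m in sequentially. measure M (\<Union>k\<in>I. A k m) \<le> (\<Sum>k\<in>I. measure M (A k m))"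
    using measure_UNION_le[OF assms(1), of "\<lambda>k. A k m" M for m] assms(2) by auto
  show "(\<lambda>m. \<Sum>k\<in>I. measure M (A k m)) \<longlonglongrightarrow> 0"
    using tendsto_sum[of I "\<lambda>k m. measure M (A k m)" "\<lambda>_. 0"] assms(3) by simp
qed simp

lemma tendsto_measure_Un_zero:
  assumes "\<And>m. A m \<in> sets M" "\<And>m. B m \<in> sets M"
    and "(\<lambda>m. measure M (A m)) \<longlonglongrightarrow> 0" "(\<lambda>m. measure M (B m)) \<longlonglongrightarrow> 0"
  shows "(\<lambda>m. measure M (A m \<union> B m)) \<longlonglongrightarrow> 0"
proof (rule tendsto_sandwich[where f="\<lambda>_. 0" and h="\<lambda>m. measure M (A m) + measure M (B m)"])
  show "\<forall>\<^sub>F m in sequentially. measure M (A m \<union> B m) \<le> measure M (A m) + measure M (B m)"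
    by (intro always_eventually allI measure_Un_le assms)
  show "(\<lambda>m. measure M (A m) + measure M (B m)) \<longlonglongrightarrow> 0"
    using tendsto_add[OF assms(3,4)] by simp
qed simp_all

lemma div_bounds:
  fixes X a e m :: real
  assumes "0 < m" "\<bar>X / m - a\<bar> \<le> e"
  shows "m * (a - e) \<le> X" "X \<le> m * (a + e)"
proof -
  have "a - e \<le> X / m" "X / m \<le> a + e" using assms(2) by linarith+
  then show "m * (a - e) \<le> X" "X \<le> m * (a + e)" using assms(1)
    by (simp_all add: pos_le_divide_eq pos_divide_le_eq mult.commute)
qed

theorem proposition2p2:

  fixes M :: "'a measure"
    and \<theta> :: "nat \<Rightarrow> 'a \<Rightarrow> bool"
    and x :: "nat \<Rightarrow> 'a \<Rightarrow> real"
    and \<pi>0 :: "nat \<Rightarrow> real"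
    and f0 f1 :: "real \<Rightarrow> real"
    and D0 D1 :: "real \<Rightarrow> real"
    and \<alpha> :: real
  assumes P: "prob_space M"
    and \<alpha>: "0 < \<alpha>" "\<alpha> < 1"
    and \<pi>0: "\<And>i. i \<ge> 1 \<Longrightarrow> 0 \<le> \<pi>0 i \<and> \<pi>0 i \<le> 1"
    and f0_meas: "f0 \<in> borel_measurable borel"
    and f1_meas: "f1 \<in> borel_measurable borel"
    and f0_dens: "\<And>t. t \<in> {0..1} \<Longrightarrow> 0 \<le> f0 t" "set_integrable lborel {0..1::real} f0"
                 "(LINT t:{0..1}|lborel. f0 t) = 1"
    and f1_dens: "\<And>t. t \<in> {0..1} \<Longrightarrow> 0 \<le> f1 t" "set_integrable lborel {0..1::real} f1"
                 "(LINT t:{0..1}|lborel. f1 t) = 1"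
    and \<theta>_meas: "\<And>i. i \<ge> 1 \<Longrightarrow> \<theta> i \<in> measurable M (count_space UNIV)"
    and x_meas: "\<And>i. i \<ge> 1 \<Longrightarrow> x i \<in> borel_measurable M"
    and x_range: "\<And>i \<omega>. i \<ge> 1 \<Longrightarrow> \<omega> \<in> space M \<Longrightarrow> x i \<omega> \<in> {0..1}"
    and law0: "\<And>i A. i \<ge> 1 \<Longrightarrow> A \<in> sets borel \<Longrightarrow>
        measure M {\<omega> \<in> space M. x i \<omega> \<in> A \<and> \<not> \<theta> i \<omega>}
          = \<pi>0 i * (LINT t:(A \<inter> {0..1})|lborel. f0 t)"
    and law1: "\<And>i A. i \<ge> 1 \<Longrightarrow> A \<in> sets borel \<Longrightarrow>
        measure M {\<omega> \<in> space M. x i \<omega> \<in> A \<and> \<theta> i \<omega>}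
          = (1 - \<pi>0 i) * (LINT t:(A \<inter> {0..1})|lborel. f1 t)"
    and C1_D0: "\<And>lam. lam \<in> {0..1} \<Longrightarrow>
        conv_in_prob M (\<lambda>m \<omega>. Dm0 \<pi>0 f0 f1 x m lam \<omega> / real m) (D0 lam)"
    and C1_D1: "\<And>lam. lam \<in> {0..1} \<Longrightarrow>
        conv_in_prob M (\<lambda>m \<omega>. Dm1 \<pi>0 f0 f1 x m lam \<omega> / real m) (D1 lam)"
    and C1_V: "\<And>lam. lam \<in> {0..1} \<Longrightarrow>
        conv_in_prob M (\<lambda>m \<omega>. Vm \<pi>0 f0 f1 \<theta> x m lam \<omega> / real m) (D1 lam)"
    and C1_cont: "continuous_on {0..1} D0" "continuous_on {0..1} D1"
    and C2: "\<exists>lam_inf \<in> {0<..1}. D0 lam_inf > 0 \<and> D1 lam_inf / D0 lam_inf < \<alpha>"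
  shows "limsup (\<lambda>m. ereal (FDRm M \<pi>0 f0 f1 \<theta> x m (lambda_m \<pi>0 f0 f1 x \<alpha> m))) \<le> ereal \<alpha>"
  proof -
  interpret prob_space M by (rule P)
  define L where "L i \<omega> = Lfdr \<pi>0 f0 f1 i (x i \<omega>)" for i \<omega>
  have Lb: "0 \<le> L i \<omega> \<and> L i \<omega> \<le> 1" if "i \<ge> 1" "\<omega> \<in> space M" for i \<omega>
  proof -
    have xr: "x i \<omega> \<in> {0..1}" using x_range that by blast
    show ?thesis unfolding L_def Lfdr_def
      using Lfdr_bounds[of "\<pi>0 i" "f0 (x i \<omega>)" "f1 (x i \<omega>)"] \<pi>0[OF that(1)]
        f0_dens(1)[OF xr] f1_dens(1)[OF xr] by auto
  qed
  have mono0: "Dm0 \<pi>0 f0 f1 x m l1 \<omega> \<le> Dm0 \<pi>0 f0 f1 x m l2 \<omega>" if "l1 \<le> l2" for m l1 l2 \<omega>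
    unfolding Dm0_def by (rule sum_mono) (use that in auto)
  have monoV: "Vm \<pi>0 f0 f1 \<theta> x m l1 \<omega> \<le> Vm \<pi>0 f0 f1 \<theta> x m l2 \<omega>" if "l1 \<le> l2" for m l1 l2 \<omega>
    unfolding Vm_def by (rule sum_mono) (use that in auto)
  have mono1: "Dm1 \<pi>0 f0 f1 x m l1 \<omega> \<le> Dm1 \<pi>0 f0 f1 x m l2 \<omega>"
    if "l1 \<le> l2" "\<omega> \<in> space M" for m l1 l2 \<omega>
    unfolding Dm1_def L_def[symmetric] by (rule sum_mono) (use that Lb in auto)
  have V_le: "0 \<le> Vm \<pi>0 f0 f1 \<theta> x m l \<omega> \<and> Vm \<pi>0 f0 f1 \<theta> x m l \<omega> \<le> Dm0 \<pi>0 f0 f1 x m l \<omega>"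
    for m l \<omega>
    unfolding Vm_def Dm0_def by (auto intro!: sum_mono sum_nonneg)
  have D0_nn: "0 \<le> Dm0 \<pi>0 f0 f1 x m l \<omega>" for m l \<omega>
    unfolding Dm0_def by (auto intro!: sum_nonneg)
  have D1_le: "0 \<le> Dm1 \<pi>0 f0 f1 x m l \<omega> \<and> Dm1 \<pi>0 f0 f1 x m l \<omega> \<le> Dm0 \<pi>0 f0 f1 x m l \<omega>"
    if "\<omega> \<in> space M" for m l \<omega>
    unfolding Dm1_def Dm0_def L_def[symmetric] using Lb that by (auto intro!: sum_mono sum_nonneg)
  have D1_alpha: "Dm1 \<pi>0 f0 f1 x m l \<omega> \<le> \<alpha> * Dm0 \<pi>0 f0 f1 x m l \<omega>"
    if "FDRhat \<pi>0 f0 f1 x m l \<omega> \<le> \<alpha>" "\<omega> \<in> space M" for m l \<omega>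
  proof (cases "Dm0 \<pi>0 f0 f1 x m l \<omega> = 0")
    case True
    then show ?thesis using D1_le[OF that(2), of m l] by simp
  next
    case False
    then have "Dm0 \<pi>0 f0 f1 x m l \<omega> > 0" using D0_nn[of m l \<omega>] by simp
    then show ?thesis using that(1) by (simp add: FDRhat_def pos_divide_le_eq)
  qed
  define S where "S m \<omega> = {lam \<in> {0..1}. FDRhat \<pi>0 f0 f1 x m lam \<omega> \<le> \<alpha>}" for m \<omega>
  have lm: "lambda_m \<pi>0 f0 f1 x \<alpha> m \<omega> = Sup (S m \<omega>)" for m \<omega>
    by (simp add: lambda_m_def S_def)
  have S0: "0 \<in> S m \<omega>" if "\<omega> \<in> space M" for m \<omega>
  proof -
    have "Dm1 \<pi>0 f0 f1 x m 0 \<omega> = 0"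
      unfolding Dm1_def L_def[symmetric] using Lb that by (intro sum.neutral) force
    then show ?thesis unfolding S_def FDRhat_def using \<alpha> by simp
  qed
  have Sbdd: "bdd_above (S m \<omega>)" for m \<omega> unfolding S_def by (auto intro: bdd_aboveI[of _ 1])
  have Sne: "S m \<omega> \<noteq> {}" if "\<omega> \<in> space M" for m \<omega> using S0[OF that] by auto
  have lm_le1: "Sup (S m \<omega>) \<le> 1" if "\<omega> \<in> space M" for m \<omega>
    using Sne[OF that] by (intro cSup_least) (auto simp: S_def)
  obtain li where li: "li \<in> {0<..1}" "D0 li > 0" "D1 li / D0 li < \<alpha>" using C2 by auto
  define c where "c = D0 li / 2"
  have c_pos: "c > 0" using li by (simp add: c_def)
  have gap: "\<alpha> * D0 li - D1 li > 0" using li by (simp add: pos_divide_less_eq)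
  define \<eta> where "\<eta> = min c ((\<alpha> * D0 li - D1 li) / (1 + \<alpha>))"
  have \<eta>_pos: "\<eta> > 0" using c_pos gap \<alpha> by (simp add: \<eta>_def)
  have uc: "uniformly_continuous_on {0..1} D1"
    by (rule compact_uniformly_continuous[OF C1_cont(2)]) simp
  have meas: "(\<lambda>\<omega>. Dm0 \<pi>0 f0 f1 x m l \<omega>) \<in> borel_measurable M"
     "(\<lambda>\<omega>. Dm1 \<pi>0 f0 f1 x m l \<omega>) \<in> borel_measurable M"
     "(\<lambda>\<omega>. Vm \<pi>0 f0 f1 \<theta> x m l \<omega>) \<in> borel_measurable M" for m l
  proof -
    have Lm: "(\<lambda>\<omega>. L i \<omega>) \<in> borel_measurable M" if "i \<ge> 1" for i
    proof -
      have "(\<lambda>t. Lfdr \<pi>0 f0 f1 i t) \<in> borel_measurable borel"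
        unfolding Lfdr_def using f0_meas f1_meas by measurable
      from measurable_compose[OF x_meas[OF that] this] show ?thesis by (simp add: L_def)
    qed
    have th: "\<theta> i \<in> measurable M (count_space UNIV)" if "i \<ge> 1" for i
      using \<theta>_meas[OF that] .
    show "(\<lambda>\<omega>. Dm0 \<pi>0 f0 f1 x m l \<omega>) \<in> borel_measurable M"
      unfolding Dm0_def L_def[symmetric]
      by (intro borel_measurable_sum) (use Lm in measurable)
    show "(\<lambda>\<omega>. Dm1 \<pi>0 f0 f1 x m l \<omega>) \<in> borel_measurable M"
      unfolding Dm1_def L_def[symmetric]
      by (intro borel_measurable_sum) (use Lm in measurable)
    show "(\<lambda>\<omega>. Vm \<pi>0 f0 f1 \<theta> x m l \<omega>) \<in> borel_measurable M"
      unfolding Vm_def L_def[symmetric]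
      by (intro borel_measurable_sum) (use Lm th in measurable)
  qed
  have main: "\<forall>\<^sub>F m in sequentially.
      FDRm M \<pi>0 f0 f1 \<theta> x m (lambda_m \<pi>0 f0 f1 x \<alpha> m) \<le> \<alpha> + \<delta>" if \<delta>: "\<delta> > 0" for \<delta>
  proof -
    define \<epsilon> where "\<epsilon> = \<delta> * c / 6"
    have \<epsilon>_pos: "\<epsilon> > 0" using \<delta> c_pos by (simp add: \<epsilon>_def)
    obtain h where h: "h > 0" "\<And>s t. s \<in> {0..1} \<Longrightarrow> t \<in> {0..1} \<Longrightarrow> dist t s < h \<Longrightarrow> dist (D1 t) (D1 s) < \<epsilon>"
      using uc \<epsilon>_pos unfolding uniformly_continuous_on_def by metis
    obtain N :: nat where N0: "3 / h < real N" using reals_Archimedean2 by blast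
    have Npos: "real N > 0" using N0 h(1) by (smt (verit) divide_pos_pos)
    have N3: "3 / real N < h" using N0 h(1) Npos by (simp add: field_simps)
    define t where "t k = real k / real N" for k :: nat
    define AV where "AV k m = {\<omega> \<in> space M. \<epsilon> < \<bar>Vm \<pi>0 f0 f1 \<theta> x m (t k) \<omega> / real m - D1 (t k)\<bar>}" for k m
    define A1 where "A1 k m = {\<omega> \<in> space M. \<epsilon> < \<bar>Dm1 \<pi>0 f0 f1 x m (t k) \<omega> / real m - D1 (t k)\<bar>}" for k m
    define E0 where "E0 m = {\<omega> \<in> space M. \<eta> < \<bar>Dm0 \<pi>0 f0 f1 x m li \<omega> / real m - D0 li\<bar>}" for m
    define E1 where "E1 m = {\<omega> \<in> space M. \<eta> < \<bar>Dm1 \<pi>0 f0 f1 x m li \<omega> / real m - D1 li\<bar>}" for m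
    define B where "B m = ((\<Union>k\<in>{0..N}. AV k m) \<union> (\<Union>k\<in>{0..N}. A1 k m)) \<union> (E0 m \<union> E1 m)" for m
    have setm: "{\<omega> \<in> space M. e < \<bar>f \<omega> / real m - a\<bar>} \<in> sets M"
      if "f \<in> borel_measurable M" for f e a and m :: nat
      using that by measurable
    have AVs: "AV k m \<in> sets M" for k m unfolding AV_def by (rule setm[OF meas(3)])
    have A1s: "A1 k m \<in> sets M" for k m unfolding A1_def by (rule setm[OF meas(2)])
    have E0s: "E0 m \<in> sets M" for m unfolding E0_def by (rule setm[OF meas(1)])
    have E1s: "E1 m \<in> sets M" for m unfolding E1_def by (rule setm[OF meas(2)])
    have t01: "t k \<in> {0..1}" if "k \<le> N" for k
      using that Npos by (auto simp: t_def divide_le_eq_1)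
    have li01: "li \<in> {0..1}" using li(1) by auto
    have Blim: "(\<lambda>m. measure M (B m)) \<longlonglongrightarrow> 0"
      unfolding B_def
    proof (intro tendsto_measure_Un_zero tendsto_measure_UN_zero)
      show "(\<lambda>m. measure M (AV k m)) \<longlonglongrightarrow> 0" if "k \<in> {0..N}" for k
        using C1_V[OF t01] that \<epsilon>_pos unfolding conv_in_prob_def AV_def by auto
      show "(\<lambda>m. measure M (A1 k m)) \<longlonglongrightarrow> 0" if "k \<in> {0..N}" for k
        using C1_D1[OF t01] that \<epsilon>_pos unfolding conv_in_prob_def A1_def by auto
      show "(\<lambda>m. measure M (E0 m)) \<longlonglongrightarrow> 0"
        using C1_D0[OF li01] \<eta>_pos unfolding conv_in_prob_def E0_def by auto
      show "(\<lambda>m. measure M (E1 m)) \<longlonglongrightarrow> 0"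
        using C1_D1[OF li01] \<eta>_pos unfolding conv_in_prob_def E1_def by auto
    qed (auto intro: AVs A1s E0s E1s)
    have Bs: "B m \<in> sets M" for m
      unfolding B_def using AVs A1s E0s E1s by auto
    have ptw: "Vm \<pi>0 f0 f1 \<theta> x m (lambda_m \<pi>0 f0 f1 x \<alpha> m \<omega>) \<omega> /
          max (Dm0 \<pi>0 f0 f1 x m (lambda_m \<pi>0 f0 f1 x \<alpha> m \<omega>) \<omega>) 1
        \<le> \<alpha> + \<delta> / 2 + indicator (B m) \<omega>" if m1: "m \<ge> 1" and om: "\<omega> \<in> space M" for m \<omega>
    proof (cases "\<omega> \<in> B m")
      case True
      let ?l = "lambda_m \<pi>0 f0 f1 x \<alpha> m \<omega>"
      have "Vm \<pi>0 f0 f1 \<theta> x m ?l \<omega> / max (Dm0 \<pi>0 f0 f1 x m ?l \<omega>) 1 \<le> 1"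
      proof -
        have "Vm \<pi>0 f0 f1 \<theta> x m ?l \<omega> \<le> max (Dm0 \<pi>0 f0 f1 x m ?l \<omega>) 1"
          using V_le[of m ?l \<omega>] by linarith
        moreover have "max (Dm0 \<pi>0 f0 f1 x m ?l \<omega>) 1 > 0" by simp
        ultimately show ?thesis by (simp add: divide_le_eq_1)
      qed
      moreover have "indicator (B m) \<omega> = (1::real)" using True by simp
      ultimately show ?thesis using \<alpha> \<delta> by linarith
    next
      case False
      let ?l = "lambda_m \<pi>0 f0 f1 x \<alpha> m \<omega>"
      have mpos: "real m > 0" using m1 by simp
      have nB: "\<omega> \<notin> AV k m" "\<omega> \<notin> A1 k m" if "k \<in> {0..N}" for k
        using False that unfolding B_def by auto
      have nE: "\<omega> \<notin> E0 m" "\<omega> \<notin> E1 m" using False unfolding B_def by auto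
      have e0: "\<bar>Dm0 \<pi>0 f0 f1 x m li \<omega> / real m - D0 li\<bar> \<le> \<eta>"
        using nE(1) om unfolding E0_def by auto
      have e1: "\<bar>Dm1 \<pi>0 f0 f1 x m li \<omega> / real m - D1 li\<bar> \<le> \<eta>"
        using nE(2) om unfolding E1_def by auto
      have eta_c: "D0 li - \<eta> \<ge> c" unfolding \<eta>_def c_def by linarith
      have eta_g: "D1 li + \<eta> \<le> \<alpha> * (D0 li - \<eta>)"
      proof -
        have "\<eta> * (1 + \<alpha>) \<le> \<alpha> * D0 li - D1 li"
        proof -
          have "\<eta> \<le> (\<alpha> * D0 li - D1 li) / (1 + \<alpha>)" unfolding \<eta>_def by simp
          then show ?thesis using \<alpha> by (simp add: le_divide_eq)
        qed
        then show ?thesis by (simp add: algebra_simps)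
      qed
      have D0li: "real m * (D0 li - \<eta>) \<le> Dm0 \<pi>0 f0 f1 x m li \<omega>"
        using div_bounds(1)[OF mpos e0] .
      have D1li: "Dm1 \<pi>0 f0 f1 x m li \<omega> \<le> real m * (D1 li + \<eta>)"
        using div_bounds(2)[OF mpos e1] .
      have D0li_c: "real m * c \<le> Dm0 \<pi>0 f0 f1 x m li \<omega>"
        using D0li eta_c mpos by (smt (verit) mult_left_mono)
      have D0li_pos: "Dm0 \<pi>0 f0 f1 x m li \<omega> > 0"
        using D0li_c mpos c_pos by (smt (verit) mult_pos_pos)
      have "Dm1 \<pi>0 f0 f1 x m li \<omega> \<le> real m * (\<alpha> * (D0 li - \<eta>))"
        using D1li eta_g mpos by (smt (verit) mult_left_mono)
      also have "\<dots> = \<alpha> * (real m * (D0 li - \<eta>))" by simp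
      also have "\<dots> \<le> \<alpha> * Dm0 \<pi>0 f0 f1 x m li \<omega>"
        using D0li \<alpha> by (intro mult_left_mono) auto
      finally have "Dm1 \<pi>0 f0 f1 x m li \<omega> \<le> \<alpha> * Dm0 \<pi>0 f0 f1 x m li \<omega>" .
      then have "FDRhat \<pi>0 f0 f1 x m li \<omega> \<le> \<alpha>"
        using D0li_pos by (simp add: FDRhat_def pos_divide_le_eq)
      then have liS: "li \<in> S m \<omega>" using li01 unfolding S_def by simp
      have l_eq: "?l = Sup (S m \<omega>)" by (rule lm)
      have li_le: "li \<le> ?l" unfolding l_eq by (rule cSup_upper[OF liS Sbdd])
      have l_le1: "?l \<le> 1" unfolding l_eq by (rule lm_le1[OF om])
      have l_ge0: "?l \<ge> 0" using li_le li01 by auto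
      obtain l' where l': "l' \<in> S m \<omega>" "?l - 1 / real N < l'"
        using less_cSupE[of "?l - 1 / real N" "S m \<omega>"] Sne[OF om] Npos unfolding l_eq by auto
      have l'_le: "l' \<le> ?l" unfolding l_eq by (rule cSup_upper[OF l'(1) Sbdd])
      have l'01: "l' \<in> {0..1}" and l'F: "FDRhat \<pi>0 f0 f1 x m l' \<omega> \<le> \<alpha>" using l'(1) unfolding S_def by auto
      define kb where "kb = nat \<lceil>?l * real N\<rceil>"
      define ka where "ka = nat \<lfloor>l' * real N\<rfloor>"
      have kb1: "?l \<le> t kb" "t kb < ?l + 1 / real N" "kb \<le> N"
      proof -
        have r: "real kb = of_int \<lceil>?l * real N\<rceil>" unfolding kb_def using l_ge0 Npos by simp
        have a1: "?l * real N \<le> real kb" unfolding r by linarith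
        have a2: "real kb < ?l * real N + 1" unfolding r by linarith
        have a3: "?l * real N \<le> real N" using l_le1 Npos by simp
        show "?l \<le> t kb" unfolding t_def using a1 Npos by (simp add: le_divide_eq)
        show "t kb < ?l + 1 / real N" unfolding t_def using a2 Npos by (simp add: divide_less_eq algebra_simps)
        have "\<lceil>?l * real N\<rceil> \<le> int N" using a3 by (simp add: ceiling_le_iff)
        then have "real kb \<le> real N" unfolding r by (metis of_int_le_iff of_int_of_nat_eq)
        then show "kb \<le> N" by simp
      qed
      have ka1: "t ka \<le> l'" "l' - 1 / real N < t ka" "ka \<le> N"
      proof -
        have r: "real ka = of_int \<lfloor>l' * real N\<rfloor>" unfolding ka_def using l'01 Npos by simp
        have a1: "real ka \<le> l' * real N" unfolding r by linarith
        have a2: "l' * real N < real ka + 1" unfolding r by linarith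
        have a3: "l' * real N \<le> real N" using l'01 Npos by simp
        show "t ka \<le> l'" unfolding t_def using a1 Npos by (simp add: divide_le_eq)
        show "l' - 1 / real N < t ka" unfolding t_def using a2 Npos by (simp add: less_divide_eq algebra_simps)
        have "real ka \<le> real N" using a1 a3 by linarith
        then show "ka \<le> N" by simp
      qed
      have tb01: "t kb \<in> {0..1}" by (rule t01[OF kb1(3)])
      have ta01: "t ka \<in> {0..1}" by (rule t01[OF ka1(3)])
      have "t kb - t ka < 3 / real N" using kb1 ka1 l'(2) by linarith
      then have "dist (t kb) (t ka) < h" using kb1 ka1 l'_le N3 by (simp add: dist_real_def)
      then have cont: "D1 (t kb) < D1 (t ka) + \<epsilon>"
        using h(2)[OF ta01 tb01] by (simp add: dist_real_def)
      have eV: "\<bar>Vm \<pi>0 f0 f1 \<theta> x m (t kb) \<omega> / real m - D1 (t kb)\<bar> \<le> \<epsilon>"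
        using nB(1)[of kb] kb1(3) om unfolding AV_def by auto
      have eA: "\<bar>Dm1 \<pi>0 f0 f1 x m (t ka) \<omega> / real m - D1 (t ka)\<bar> \<le> \<epsilon>"
        using nB(2)[of ka] ka1(3) om unfolding A1_def by auto
      have "Vm \<pi>0 f0 f1 \<theta> x m ?l \<omega> \<le> Vm \<pi>0 f0 f1 \<theta> x m (t kb) \<omega>"
        by (rule monoV) (rule kb1(1))
      also have "\<dots> \<le> real m * (D1 (t kb) + \<epsilon>)" by (rule div_bounds(2)[OF mpos eV])
      also have "\<dots> \<le> real m * (D1 (t ka) - \<epsilon> + 3 * \<epsilon>)"
        using cont mpos by (intro mult_left_mono) auto
      also have "\<dots> = real m * (D1 (t ka) - \<epsilon>) + 3 * \<epsilon> * real m" by (simp add: algebra_simps)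
      also have "\<dots> \<le> Dm1 \<pi>0 f0 f1 x m (t ka) \<omega> + 3 * \<epsilon> * real m"
        using div_bounds(1)[OF mpos eA] by simp
      also have "\<dots> \<le> Dm1 \<pi>0 f0 f1 x m l' \<omega> + 3 * \<epsilon> * real m"
        using mono1[OF ka1(1) om] by simp
      also have "\<dots> \<le> \<alpha> * Dm0 \<pi>0 f0 f1 x m l' \<omega> + 3 * \<epsilon> * real m"
        using D1_alpha[OF l'F om] by simp
      also have "\<dots> \<le> \<alpha> * Dm0 \<pi>0 f0 f1 x m ?l \<omega> + 3 * \<epsilon> * real m"
        using mono0[OF l'_le, of m \<omega>] \<alpha> by (simp add: mult_left_mono)
      finally have Vb: "Vm \<pi>0 f0 f1 \<theta> x m ?l \<omega> \<le> \<alpha> * Dm0 \<pi>0 f0 f1 x m ?l \<omega> + 3 * \<epsilon> * real m" .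
      have Dl: "real m * c \<le> Dm0 \<pi>0 f0 f1 x m ?l \<omega>"
        using D0li_c mono0[OF li_le, of m \<omega>] by linarith
      have Dlpos: "Dm0 \<pi>0 f0 f1 x m ?l \<omega> > 0" using Dl mpos c_pos by (smt (verit) mult_pos_pos)
      have Vnn: "0 \<le> Vm \<pi>0 f0 f1 \<theta> x m ?l \<omega>" using V_le by blast
      have "Vm \<pi>0 f0 f1 \<theta> x m ?l \<omega> / max (Dm0 \<pi>0 f0 f1 x m ?l \<omega>) 1
          \<le> Vm \<pi>0 f0 f1 \<theta> x m ?l \<omega> / Dm0 \<pi>0 f0 f1 x m ?l \<omega>"
        using Vnn Dlpos by (intro divide_left_mono) auto
      also have "\<dots> \<le> \<alpha> + 3 * \<epsilon> * real m / Dm0 \<pi>0 f0 f1 x m ?l \<omega>"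
        using Vb Dlpos by (simp add: divide_le_eq algebra_simps)
      also have "3 * \<epsilon> * real m / Dm0 \<pi>0 f0 f1 x m ?l \<omega> \<le> 3 * \<epsilon> * real m / (real m * c)"
        using Dl Dlpos \<epsilon>_pos mpos c_pos by (intro divide_left_mono) (auto intro!: mult_pos_pos)
      also have "3 * \<epsilon> * real m / (real m * c) = \<delta> / 2"
        using mpos c_pos by (simp add: \<epsilon>_def field_simps)
      finally show ?thesis using False by simp
    qed
    have bound: "FDRm M \<pi>0 f0 f1 \<theta> x m (lambda_m \<pi>0 f0 f1 x \<alpha> m) \<le> \<alpha> + \<delta> / 2 + measure M (B m)"
      if "m \<ge> 1" for m
    proof (cases "integrable M (\<lambda>\<omega>. Vm \<pi>0 f0 f1 \<theta> x m (lambda_m \<pi>0 f0 f1 x \<alpha> m \<omega>) \<omega> /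
          max (Dm0 \<pi>0 f0 f1 x m (lambda_m \<pi>0 f0 f1 x \<alpha> m \<omega>) \<omega>) 1)")
      case True
      have "FDRm M \<pi>0 f0 f1 \<theta> x m (lambda_m \<pi>0 f0 f1 x \<alpha> m)
          \<le> (\<integral>\<omega>. \<alpha> + \<delta> / 2 + indicator (B m) \<omega> \<partial>M)"
        unfolding FDRm_def
        by (rule integral_mono[OF True]) (use Bs ptw[OF that] in \<open>auto intro!: Bochner_Integration.integrable_add integrable_real_indicator simp: Bs less_top[symmetric]\<close>)
      also have "\<dots> = \<alpha> + \<delta> / 2 + measure M (B m)"
        using Bs[of m]
        by (subst Bochner_Integration.integral_add)
          (auto simp: prob_space Int_absorb1 Int_absorb2 sets.sets_into_space less_top[symmetric] intro!: integrable_real_indicator)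
      finally show ?thesis .
    next
      case False
      then have "FDRm M \<pi>0 f0 f1 \<theta> x m (lambda_m \<pi>0 f0 f1 x \<alpha> m) = 0"
        unfolding FDRm_def by (rule not_integrable_integral_eq)
      then show ?thesis using \<alpha> \<delta> by simp
    qed
    have "\<forall>\<^sub>F m in sequentially. measure M (B m) < \<delta> / 2"
      using order_tendstoD(2)[OF Blim, of "\<delta> / 2"] \<delta> by simp
    then show ?thesis using eventually_ge_at_top[of "1::nat"]
      by eventually_elim (use bound in fastforce)
  qed
  show ?thesis
  proof (rule ereal_le_epsilon2)
    fix \<delta> :: real assume "0 < \<delta>"
    have "limsup (\<lambda>m. ereal (FDRm M \<pi>0 f0 f1 \<theta> x m (lambda_m \<pi>0 f0 f1 x \<alpha> m))) \<le> ereal (\<alpha> + \<delta>)"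
      by (rule Limsup_bounded) (use main[OF \<open>0 < \<delta>\<close>] in \<open>auto elim: eventually_mono\<close>)
    then show "limsup (\<lambda>m. ereal (FDRm M \<pi>0 f0 f1 \<theta> x m (lambda_m \<pi>0 f0 f1 x \<alpha> m))) \<le> ereal \<alpha> + ereal \<delta>"
      by simp
  qed
qed

end
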